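(* For every Bochvar system $\mathbb{B}=\langle\mathbf{B},\mathbf{I}\rangle$, $\mathbb{B}$ is isomorphic to the Bochvar system $\mathbb{B}_{\mathbf{A}_{\mathbb{B}}}$.
   Context: A Bochvar system is a pair $\langle\mathbf{B},\mathbf{I}\rangle$ with $\mathbf{B}$ a Boolean algebra and $I\subseteq B$ containing $1$ and closed under $\wedge$. Bochvar systems $\langle\mathbf{B}_1,\mathbf{I}_1\rangle$ and $\langle\mathbf{B}_2,\mathbf{I}_2\rangle$ are isomorphic if there is a Boolean isomorphism $g:\mathbf{B}_1\to\mathbf{B}_2$ with $g(i)\in I_2$ for all $i\in I_1$. $\mathbf{WK}^e$ is the three-element algebra on $\{0,\tfrac12,1\}$ of type $\langle\wedge,\vee,\neg,J_2,0,1\rangle$. Its operations are: - $\neg$ swaps $0,1$ and fixes $\tfrac12$; - $\wedge,\vee$ are Boolean on $\{0,1\}$ and return $\tfrac12$ if some argument is $\tfrac12$; - $J_2(1)=1$ and $J_2(\tfrac12)=J_2(0)=0$. Bochvar algebras are the members of $ISP(\mathbf{WK}^e)$. Their $\{\wedge,\vee,\neg,0,1\}$-reducts are canonically Płonka sums of Boolean algebras $\mathbf{A}_i$ over a join-semilattice $\langle I,\vee,i_0\rangle$. For a Bochvar system $\mathbb{B}$, $\mathbf{A}_{\mathbb{B}}$ is the unique Bochvar algebra whose $\{\wedge,\vee,\neg,0,1\}$-reduct is the Płonka sum of the following system: - index semilattice $I$ ordered dually to $\mathbf{B}$; - fibres $\mathbf{B}/[i)$, the quotient by the congruence of the principal filter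 $[i)$; - maps $p_{ij}(a/[i))=a/[j)$. For a Bochvar algebra $\mathbf{A}$, $\mathbb{B}_{\mathbf{A}}=\langle\mathbf{A}_{i_0},K\rangle$ with $K=\{J_2(1^{A_i}):i\in I\}$, where $1^{A_i}$ is the top of fibre $\mathbf{A}_i$. *)

theory Defs
  imports Main
begin

definition bochvar_system :: "'a::boolean_algebra set \<Rightarrow> bool" where
  "bochvar_system I \<longleftrightarrow> top \<in> I \<and> (\<forall>i\<in>I. \<forall>j\<in>I. inf i j \<in> I)"

datatype wk = W0 | Wh | W1

fun wneg :: "wk \<Rightarrow> wk" where
  "wneg W0 = W1" | "wneg Wh = Wh" | "wneg W1 = W0"

definition wmeet :: "wk \<Rightarrow> wk \<Rightarrow> wk" where
  "wmeet x y = (if x = Wh \<or> y = Wh then Wh else if x = W1 \<and> y = W1 then W1 else W0)"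

definition wjoin :: "wk \<Rightarrow> wk \<Rightarrow> wk" where
  "wjoin x y = (if x = Wh \<or> y = Wh then Wh else if x = W0 \<and> y = W0 then W0 else W1)"

definition wJ2 :: "wk \<Rightarrow> wk" where
  "wJ2 x = (if x = W1 then W1 else W0)"

record 'c balg =
  carr :: "'c set"
  bmeet :: "'c \<Rightarrow> 'c \<Rightarrow> 'c"
  bjoin :: "'c \<Rightarrow> 'c \<Rightarrow> 'c"
  bneg :: "'c \<Rightarrow> 'c"
  bJ2 :: "'c \<Rightarrow> 'c"
  bzero :: "'c"
  bone :: "'c"

definition is_algebra :: "'c balg \<Rightarrow> bool" where
  "is_algebra A \<longleftrightarrow>
     (\<forall>a\<in>carr A. \<forall>b\<in>carr A. bmeet A a b \<in> carr A \<and> bjoin A a b \<in> carr A) \<and>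
     (\<forall>a\<in>carr A. bneg A a \<in> carr A \<and> bJ2 A a \<in> carr A) \<and>
     bzero A \<in> carr A \<and> bone A \<in> carr A"

definition hom_wk :: "'c balg \<Rightarrow> ('c \<Rightarrow> wk) \<Rightarrow> bool" where
  "hom_wk A f \<longleftrightarrow>
     (\<forall>a\<in>carr A. \<forall>b\<in>carr A. f (bmeet A a b) = wmeet (f a) (f b) \<and>
                               f (bjoin A a b) = wjoin (f a) (f b)) \<and>
     (\<forall>a\<in>carr A. f (bneg A a) = wneg (f a) \<and> f (bJ2 A a) = wJ2 (f a)) \<and>
     f (bzero A) = W0 \<and> f (bone A) = W1"

text \<open>Membership in ISP(WK^e): A is an algebra that embeds into a power (WK^e)^F;
  the embedding is given by its coordinate maps, i.e. a point-separating family F of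
  homomorphisms into WK^e (the index set of the power is F itself).\<close>
definition bochvar_alg :: "'c balg \<Rightarrow> bool" where
  "bochvar_alg A \<longleftrightarrow> is_algebra A \<and>
     (\<exists>F :: ('c \<Rightarrow> wk) set. (\<forall>f\<in>F. hom_wk A f) \<and>
        (\<forall>a\<in>carr A. \<forall>b\<in>carr A. (\<forall>f\<in>F. f a = f b) \<longrightarrow> a = b))"

text \<open>Elements of the Plonka sum are pairs (i, c) with i the index (an element of I,
  the index semilattice being I ordered dually to B, so the semilattice join is the
  Boolean meet and the least index i0 is top) and c a class of B modulo the
  congruence of the principal filter [i), i.e. a ~ b iff a meet i = b meet i.\<close>

definition cls :: "'a::boolean_algebra \<Rightarrow> 'a \<Rightarrow> 'a set" where
  "cls i a = {b. inf b i = inf a i}"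

definition rep :: "'a set \<Rightarrow> 'a" where
  "rep c = (SOME a. a \<in> c)"

definition pl_carrier :: "'a::boolean_algebra set \<Rightarrow> ('a \<times> 'a set) set" where
  "pl_carrier I = {(i, cls i a) | i a. i \<in> I}"

text \<open>Plonka sum operations: x in A_i, y in A_j are sent by p_{i,i\<or>j}, p_{j,i\<or>j}
  (p_{ij}(a/[i)) = a/[j)) to the fibre of the join index and combined there.\<close>
definition pl_meet :: "('a::boolean_algebra \<times> 'a set) \<Rightarrow> ('a \<times> 'a set) \<Rightarrow> ('a \<times> 'a set)" where
  "pl_meet x y = (inf (fst x) (fst y),
                  cls (inf (fst x) (fst y)) (inf (rep (snd x)) (rep (snd y))))"

definition pl_join :: "('a::boolean_algebra \<times> 'a set) \<Rightarrow> ('a \<times> 'a set) \<Rightarrow> ('a \<times> 'a set)" where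
  "pl_join x y = (inf (fst x) (fst y),
                  cls (inf (fst x) (fst y)) (sup (rep (snd x)) (rep (snd y))))"

definition pl_neg :: "('a::boolean_algebra \<times> 'a set) \<Rightarrow> ('a \<times> 'a set)" where
  "pl_neg x = (fst x, cls (fst x) (- rep (snd x)))"

text \<open>The constants live in the fibre of the least index i0 = top.\<close>
definition pl_zero :: "('a::boolean_algebra \<times> 'a set)" where
  "pl_zero = (top, cls top bot)"

definition pl_one :: "('a::boolean_algebra \<times> 'a set)" where
  "pl_one = (top, cls top top)"

text \<open>The algebra whose (meet, join, neg, 0, 1)-reduct is the Plonka sum above and
  whose J2 operation is J.  A_B is the (unique) such algebra that is a Bochvar algebra.\<close>
definition A_sys :: "'a::boolean_algebra set \<Rightarrow> ('a \<times> 'a set \<Rightarrow> 'a \<times> 'a set)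
                      \<Rightarrow> ('a \<times> 'a set) balg" where
  "A_sys I J = \<lparr> carr = pl_carrier I, bmeet = pl_meet, bjoin = pl_join, bneg = pl_neg,
                 bJ2 = J, bzero = pl_zero, bone = pl_one \<rparr>"

definition fibre :: "('a \<times> 'a set) balg \<Rightarrow> 'a \<Rightarrow> ('a \<times> 'a set) set" where
  "fibre A i = {x \<in> carr A. fst x = i}"

definition fibre_top :: "'a::boolean_algebra \<Rightarrow> ('a \<times> 'a set)" where
  "fibre_top i = (i, cls i top)"

definition K_set :: "'a::boolean_algebra set \<Rightarrow> ('a \<times> 'a set) balg \<Rightarrow> ('a \<times> 'a set) set" where
  "K_set I A = {bJ2 A (fibre_top i) | i. i \<in> I}"

text \<open>Isomorphism of Bochvar systems <B, I> and <C, K>, where the Boolean algebra C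
  is the carrier S with the operations of A restricted to it: a Boolean isomorphism
  g : B \<rightarrow> C with g(i) \<in> K for all i \<in> I.\<close>
definition sys_iso :: "'a::boolean_algebra set \<Rightarrow> 'c balg \<Rightarrow> 'c set \<Rightarrow> 'c set \<Rightarrow> bool" where
  "sys_iso I A S K \<longleftrightarrow>
     (\<exists>g. bij_betw g UNIV S \<and>
          (\<forall>x y. g (inf x y) = bmeet A (g x) (g y) \<and> g (sup x y) = bjoin A (g x) (g y)) \<and>
          (\<forall>x. g (- x) = bneg A (g x)) \<and>
          g bot = bzero A \<and> g top = bone A \<and>
          (\<forall>i\<in>I. g i \<in> K))"

text \<open>B is isomorphic to B_A, with B_A = <A_{i0}, K>, i0 = top.\<close>
definition iso_to_BA :: "'a::boolean_algebra set \<Rightarrow> ('a \<times> 'a set) balg \<Rightarrow> bool" where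
  "iso_to_BA I A \<longleftrightarrow> sys_iso I A (fibre A top) (K_set I A)"

end

theory Submission
  imports Defs
begin

definition filt :: "'a::boolean_algebra set \<Rightarrow> bool" where
  "filt F \<longleftrightarrow> top \<in> F \<and> (\<forall>a\<in>F. \<forall>b\<in>F. inf a b \<in> F) \<and> (\<forall>a\<in>F. \<forall>b. a \<le> b \<longrightarrow> b \<in> F) \<and> bot \<notin> F"

definition ufilter :: "'a::boolean_algebra set \<Rightarrow> bool" where
  "ufilter U \<longleftrightarrow> (\<forall>a b. inf a b \<in> U \<longleftrightarrow> a \<in> U \<and> b \<in> U) \<and> (\<forall>a. - a \<in> U \<longleftrightarrow> a \<notin> U)"

lemma filtD: assumes "filt F" shows "top \<in> F" "a \<in> F \<Longrightarrow> b \<in> F \<Longrightarrow> inf a b \<in> F"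
  "a \<in> F \<Longrightarrow> a \<le> b \<Longrightarrow> b \<in> F" "bot \<notin> F"
  using assms unfolding filt_def by blast+

lemma ultrafilter_exists:
  fixes x :: "'a::boolean_algebra"
  assumes "x \<noteq> bot"
  shows "\<exists>U. ufilter U \<and> x \<in> U"
proof -
  define A where "A = {F. filt F \<and> x \<in> F}"
  have px: "{y. x \<le> y} \<in> A"
    using assms unfolding A_def filt_def by (auto simp: bot_unique)
  have "\<exists>M\<in>A. \<forall>X\<in>A. M \<subseteq> X \<longrightarrow> X = M"
  proof (rule subset_Zorn_nonempty)
    show "A \<noteq> {}" using px by blast
  next
    fix C assume C: "C \<noteq> {}" "subset.chain A C"
    hence CA: "C \<subseteq> A" and ch: "\<forall>X\<in>C. \<forall>Y\<in>C. X \<subseteq> Y \<or> Y \<subseteq> X"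
      by (auto simp: subset.chain_def)
    have fC: "\<And>F. F \<in> C \<Longrightarrow> filt F \<and> x \<in> F" using CA A_def by blast
    show "\<Union>C \<in> A"
      unfolding A_def filt_def
    proof (intro CollectI conjI ballI allI impI)
      show "top \<in> \<Union>C" using C fC filtD(1) by blast
      show "x \<in> \<Union>C" using C fC by blast
      show "bot \<notin> \<Union>C" using fC filtD(4) by blast
    next
      fix a b assume "a \<in> \<Union>C" "b \<in> \<Union>C"
      then obtain F G where FG: "F \<in> C" "G \<in> C" "a \<in> F" "b \<in> G" by (auto simp only: Union_iff)
      show "inf a b \<in> \<Union>C"
      proof (cases "F \<subseteq> G")
        case True hence "a \<in> G" "filt G" using FG fC[of G] by auto
        thus ?thesis using FG filtD(2)[of G a b] by blast
      next
        case False hence "G \<subseteq> F" using ch FG by blast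
        hence "b \<in> F" "filt F" using FG fC[of F] by auto
        thus ?thesis using FG filtD(2)[of F a b] by blast
      qed
    next
      fix a b assume "a \<in> \<Union>C" "a \<le> b"
      thus "b \<in> \<Union>C" using fC filtD(3) by blast
    qed
  qed
  then obtain M where MA: "M \<in> A" and Mmax: "\<forall>X\<in>A. M \<subseteq> X \<longrightarrow> X = M" by blast
  have fM: "filt M" and xM: "x \<in> M" using MA A_def by auto
  have up: "\<And>a b. a \<in> M \<Longrightarrow> a \<le> b \<Longrightarrow> b \<in> M" using fM filtD by blast
  have cl: "\<And>a b. a \<in> M \<Longrightarrow> b \<in> M \<Longrightarrow> inf a b \<in> M" using fM filtD by blast
  have nb: "bot \<notin> M" using fM filtD by blast
  have tM: "top \<in> M" using fM filtD by blast
  have i1: "inf a b \<in> M \<longleftrightarrow> a \<in> M \<and> b \<in> M" for a b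
    using up cl by (meson inf_le1 inf_le2)
  have i2: "- a \<in> M \<longleftrightarrow> a \<notin> M" for a
  proof
    assume "- a \<in> M" thus "a \<notin> M" using cl nb by fastforce
  next
    assume aM: "a \<notin> M"
    define M' where "M' = {y. \<exists>u\<in>M. inf u a \<le> y}"
    show "- a \<in> M"
    proof (rule ccontr)
      assume na: "- a \<notin> M"
      have "bot \<notin> M'"
      proof
        assume "bot \<in> M'"
        then obtain u where "u \<in> M" "inf u a \<le> bot" unfolding M'_def by blast
        hence "u \<le> - a" by (simp add: bot_unique inf_shunt)
        thus False using up \<open>u \<in> M\<close> na by blast
      qed
      moreover have "M \<subseteq> M'" unfolding M'_def by (auto intro: inf_le1)
      moreover have "a \<in> M'" unfolding M'_def using tM by force
      moreover have "filt M'"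
        unfolding filt_def
      proof (intro conjI ballI allI impI)
        show "top \<in> M'" unfolding M'_def using tM by auto
        show "bot \<notin> M'" by fact
      next
        fix p q assume "p \<in> M'" "q \<in> M'"
        then obtain u v where uv: "u \<in> M" "v \<in> M" "inf u a \<le> p" "inf v a \<le> q"
          unfolding M'_def by blast
        have "inf (inf u v) a \<le> inf u a" "inf (inf u v) a \<le> inf v a"
          by (simp_all add: inf.coboundedI1 inf_mono)
        hence "inf (inf u v) a \<le> inf p q" using uv by (meson inf.boundedI order_trans)
        thus "inf p q \<in> M'" unfolding M'_def using uv cl by blast
      next
        fix p q assume "p \<in> M'" "p \<le> q"
        thus "q \<in> M'" unfolding M'_def using order_trans by blast
      qed
      ultimately have "M' \<in> A" "M \<subseteq> M'" using xM A_def by auto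
      hence "M' = M" using Mmax by blast
      thus False using \<open>a \<in> M'\<close> aM by blast
    qed
  qed
  show ?thesis using i1 i2 xM unfolding ufilter_def by blast
qed

lemma cls_eq: "cls i a = cls i b \<longleftrightarrow> inf a i = inf b i"
  unfolding cls_def by auto

lemma rep_cls: "inf (rep (cls i a)) i = inf a i"
proof -
  have "a \<in> cls i a" unfolding cls_def by simp
  hence "rep (cls i a) \<in> cls i a" unfolding rep_def by (rule someI)
  thus ?thesis unfolding cls_def by simp
qed

lemma cls_top: "cls top a = {a}" unfolding cls_def by auto

lemma rep_single: "rep {a} = a" unfolding rep_def by simp

lemma meet_aux:
  fixes a :: "'a::boolean_algebra"
  assumes "inf a' i = inf a i" "inf b' j = inf b j"
  shows "inf (inf a' b') (inf i j) = inf (inf a b) (inf i j)"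
proof -
  have "inf (inf a' b') (inf i j) = inf (inf a' i) (inf b' j)" by (simp add: inf_aci)
  also have "\<dots> = inf (inf a i) (inf b j)" using assms by simp
  also have "\<dots> = inf (inf a b) (inf i j)" by (simp add: inf_aci)
  finally show ?thesis .
qed

lemma join_aux:
  fixes a :: "'a::boolean_algebra"
  assumes "inf a' i = inf a i" "inf b' j = inf b j"
  shows "inf (sup a' b') (inf i j) = inf (sup a b) (inf i j)"
proof -
  have "inf (sup a' b') (inf i j) = sup (inf a' (inf i j)) (inf b' (inf i j))"
    by (rule inf_sup_distrib2)
  also have "\<dots> = sup (inf (inf a' i) j) (inf (inf b' j) i)" by (simp add: inf_aci)
  also have "\<dots> = sup (inf (inf a i) j) (inf (inf b j) i)" using assms by simp
  also have "\<dots> = sup (inf a (inf i j)) (inf b (inf i j))" by (simp add: inf_aci)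
  also have "\<dots> = inf (sup a b) (inf i j)" by (rule inf_sup_distrib2[symmetric])
  finally show ?thesis .
qed

lemma neg_aux:
  fixes a :: "'a::boolean_algebra"
  assumes "inf a' i = inf a i"
  shows "inf (- a') i = inf (- a) i"
proof -
  have e: "inf (- x) i = inf (- (inf x i)) i" for x :: 'a
    by (simp add: inf_sup_distrib2)
  show ?thesis using e[of a'] e[of a] assms by simp
qed

lemma pl_meet_f: "pl_meet (i, cls i a) (j, cls j b) = (inf i j, cls (inf i j) (inf a b))"
  unfolding pl_meet_def by (simp add: cls_eq meet_aux[OF rep_cls rep_cls])

lemma pl_join_f: "pl_join (i, cls i a) (j, cls j b) = (inf i j, cls (inf i j) (sup a b))"
  unfolding pl_join_def by (simp add: cls_eq join_aux[OF rep_cls rep_cls])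

lemma pl_neg_f: "pl_neg (i, cls i a) = (i, cls i (- a))"
  unfolding pl_neg_def by (simp add: cls_eq neg_aux[OF rep_cls])

lemma mem_carr: "(k, cls k a) \<in> pl_carrier I \<longleftrightarrow> k \<in> I"
  unfolding pl_carrier_def by blast

lemma carrE: "x \<in> pl_carrier I \<Longrightarrow> (\<And>k a. x = (k, cls k a) \<Longrightarrow> k \<in> I \<Longrightarrow> P) \<Longrightarrow> P"
  unfolding pl_carrier_def by blast

lemma compl_bot_le:
  fixes a :: "'a::boolean_algebra"
  shows "inf a (- b) = bot \<Longrightarrow> a \<le> b"
  by (simp add: inf_shunt)

lemma part2:
  fixes I :: "'a::boolean_algebra set"
  assumes sys: "bochvar_system I" and ba: "bochvar_alg (A_sys I J)" and iI: "i \<in> I"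
  shows "J (i, cls i top) = (top, cls top i)"
proof -
  have tI: "top \<in> I" using sys bochvar_system_def by blast
  from ba obtain F where homs: "\<forall>f\<in>F. hom_wk (A_sys I J) f"
    and sep: "\<forall>a\<in>pl_carrier I. \<forall>b\<in>pl_carrier I. (\<forall>f\<in>F. f a = f b) \<longrightarrow> a = b"
    and alg: "is_algebra (A_sys I J)"
    unfolding bochvar_alg_def by (auto simp: A_sys_def)
  have sepI: "\<And>a b. a \<in> pl_carrier I \<Longrightarrow> b \<in> pl_carrier I \<Longrightarrow> (\<And>f. f \<in> F \<Longrightarrow> f a = f b) \<Longrightarrow> a = b"
    using sep by blast
  have fm: "\<And>f a b. f \<in> F \<Longrightarrow> a \<in> pl_carrier I \<Longrightarrow> b \<in> pl_carrier I \<Longrightarrow> f (pl_meet a b) = wmeet (f a) (f b)"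
    and fj: "\<And>f a b. f \<in> F \<Longrightarrow> a \<in> pl_carrier I \<Longrightarrow> b \<in> pl_carrier I \<Longrightarrow> f (pl_join a b) = wjoin (f a) (f b)"
    and fn: "\<And>f a. f \<in> F \<Longrightarrow> a \<in> pl_carrier I \<Longrightarrow> f (pl_neg a) = wneg (f a)"
    and fJ: "\<And>f a. f \<in> F \<Longrightarrow> a \<in> pl_carrier I \<Longrightarrow> f (J a) = wJ2 (f a)"
    and f0: "\<And>f. f \<in> F \<Longrightarrow> f pl_zero = W0"
    and f1: "\<And>f. f \<in> F \<Longrightarrow> f pl_one = W1"
    using homs unfolding hom_wk_def A_sys_def by auto
  define one_i where "one_i = (i, cls i (top::'a))"
  define e where "e = (top::'a, cls top i)"
  have oc: "one_i \<in> pl_carrier I" using iI mem_carr one_i_def by blast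
  have tc: "\<And>b. (top, cls top b) \<in> pl_carrier I" using tI mem_carr by blast
  have ec: "e \<in> pl_carrier I" using tc e_def by blast
  have topnh: "f (top, cls top b) \<noteq> Wh" if "f \<in> F" for f b
  proof -
    have "pl_join (top, cls top b) (pl_neg (top, cls top b)) = pl_one"
      by (simp add: pl_join_f pl_neg_f pl_one_def)
    moreover have "f (pl_join (top, cls top b) (pl_neg (top, cls top b))) = wjoin (f (top, cls top b)) (f (pl_neg (top, cls top b)))"
      using fj[OF that tc[of b] tc[of "-b"]] by (simp add: pl_neg_f)
    moreover have "f (pl_neg (top, cls top b)) = wneg (f (top, cls top b))"
      using fn[OF that tc] by simp
    ultimately have "wjoin (f (top, cls top b)) (wneg (f (top, cls top b))) = W1"
      using f1[OF that] by simp
    thus ?thesis by (cases "f (top, cls top b)") (auto simp: wjoin_def)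
  qed
  have xc: "J one_i \<in> pl_carrier I" using alg oc unfolding is_algebra_def A_sys_def by auto
  then obtain k a where x: "J one_i = (k, cls k a)" and kI: "k \<in> I" by (rule carrE)
  have fxnh: "f (J one_i) \<noteq> Wh" if "f \<in> F" for f
    using fJ[OF that oc] by (simp add: wJ2_def)
  have "pl_join (J one_i) (pl_neg (J one_i)) = pl_one"
  proof (rule sepI)
    show "pl_join (J one_i) (pl_neg (J one_i)) \<in> pl_carrier I"
      using x kI by (simp add: pl_join_f pl_neg_f mem_carr)
    show "pl_one \<in> pl_carrier I" using tc pl_one_def by metis
    fix f assume f: "f \<in> F"
    have nc: "pl_neg (J one_i) \<in> pl_carrier I" using x kI by (simp add: pl_neg_f mem_carr)
    have "f (pl_join (J one_i) (pl_neg (J one_i))) = wjoin (f (J one_i)) (wneg (f (J one_i)))"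
      using fj[OF f xc nc] fn[OF f xc] by simp
    thus "f (pl_join (J one_i) (pl_neg (J one_i))) = f pl_one"
      using fxnh[OF f] f1[OF f] by (cases "f (J one_i)") (auto simp: wjoin_def)
  qed
  hence kt: "k = top" using x by (simp add: pl_join_f pl_neg_f pl_one_def)
  have ome: "pl_meet one_i e = one_i"
    unfolding one_i_def e_def by (simp add: pl_meet_f cls_eq)
  have oe: "f e = W1" if "f \<in> F" "f one_i = W1" for f
  proof -
    have h: "f one_i = wmeet (f one_i) (f e)" using fm[OF that(1) oc ec] unfolding ome .
    from h have "W1 = wmeet W1 (f e)" by (simp only: that(2))
    thus ?thesis by (cases "f e") (auto simp: wmeet_def)
  qed
  have fxe: "f (J one_i) = W1 \<longleftrightarrow> f one_i = W1" if "f \<in> F" for f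
    using fJ[OF that oc] by (simp add: wJ2_def)
  have "pl_meet (J one_i) (pl_neg e) = pl_zero"
  proof (rule sepI)
    show "pl_meet (J one_i) (pl_neg e) \<in> pl_carrier I"
      using x kt e_def tc by (simp add: pl_meet_f pl_neg_f)
    show "pl_zero \<in> pl_carrier I" using tc pl_zero_def by metis
    fix f assume f: "f \<in> F"
    have "f (pl_meet (J one_i) (pl_neg e)) = wmeet (f (J one_i)) (wneg (f e))"
      using fm[OF f xc tc[of "-i"]] fn[OF f ec] unfolding e_def by (simp add: pl_neg_f)
    moreover have "f e \<noteq> Wh" using topnh[OF f] e_def by simp
    ultimately show "f (pl_meet (J one_i) (pl_neg e)) = f pl_zero"
      using fxe[OF f] oe[OF f] fxnh[OF f] f0[OF f]
      by (cases "f (J one_i)"; cases "f e") (auto simp: wmeet_def)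
  qed
  hence B: "inf a (- i) = bot"
    using x kt e_def by (simp add: pl_meet_f pl_neg_f pl_zero_def cls_eq)
  have C: "inf i (- a) = bot"
  proof (rule ccontr)
    define d where "d = inf i (- a)"
    assume "inf i (- a) \<noteq> bot"
    hence dn: "d \<noteq> bot" using d_def by simp
    define p where "p = (i, cls i d)"
    define q where "q = (i, cls i (bot::'a))"
    have "p \<noteq> q" unfolding p_def q_def d_def using dn d_def
      by (simp add: cls_eq inf_aci)
    moreover have pc: "p \<in> pl_carrier I" "q \<in> pl_carrier I"
      unfolding p_def q_def using iI mem_carr by blast+
    ultimately obtain f where f: "f \<in> F" "f p \<noteq> f q" using sepI by blast
    have pm: "p = pl_meet one_i (top, cls top d)"
      unfolding p_def one_i_def by (simp add: pl_meet_f)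
    have qm: "q = pl_meet one_i pl_zero"
      unfolding q_def one_i_def by (simp add: pl_meet_f pl_zero_def)
    have fp: "f p = wmeet (f one_i) (f (top, cls top d))"
      using pm fm[OF f(1) oc tc] by simp
    have fq: "f q = wmeet (f one_i) W0"
      using qm fm[OF f(1) oc tc[of bot]] f0[OF f(1)] by (simp add: pl_zero_def)
    have dnh: "f (top, cls top d) \<noteq> Wh" using topnh f(1) by blast
    have o1: "f one_i = W1"
    proof (rule ccontr)
      assume "f one_i \<noteq> W1"
      hence "f p = f q" using fp fq dnh
        by (cases "f one_i"; cases "f (top, cls top d)") (auto simp: wmeet_def)
      thus False using f by simp
    qed
    hence fx1: "f (J one_i) = W1" using fxe f by simp
    have dm: "(top, cls top d) = pl_meet e (pl_neg (J one_i))"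
      unfolding e_def d_def using x kt by (simp add: pl_meet_f pl_neg_f)
    have "f (top, cls top d) = wmeet (f e) (wneg (f (J one_i)))"
      using dm fm[OF f(1) ec tc[of "-a"]] fn[OF f(1) xc] unfolding x kt by (simp add: pl_neg_f)
    hence "f (top, cls top d) = W0" using fx1 topnh[OF f(1)] e_def
      by (cases "f e") (auto simp: wmeet_def)
    hence "f p = W0" using fp o1 by (simp add: wmeet_def)
    moreover have "f q = W0" using fq o1 by (simp add: wmeet_def)
    ultimately show False using f by simp
  qed
  have "a \<le> i" using B by (rule compl_bot_le)
  moreover have "i \<le> a" using C by (rule compl_bot_le)
  ultimately have "a = i" by (rule antisym)
  hence "J one_i = (top, cls top i)" using x kt by (simp only:)
  thus ?thesis unfolding one_i_def .
qed


lemma uf_inf: "ufilter U \<Longrightarrow> inf a b \<in> U \<longleftrightarrow> a \<in> U \<and> b \<in> U"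
  unfolding ufilter_def by blast

lemma uf_neg: "ufilter U \<Longrightarrow> - a \<in> U \<longleftrightarrow> a \<notin> U"
  unfolding ufilter_def by blast

lemma uf_top: assumes "ufilter U" shows "top \<in> U"
proof (rule ccontr)
  assume "top \<notin> U"
  hence "bot \<in> U" using uf_neg[OF assms, of top] by simp
  hence "inf bot top \<in> U" by simp
  thus False using uf_inf[OF assms] \<open>top \<notin> U\<close> by blast
qed

lemma uf_sup: assumes "ufilter U" shows "sup a b \<in> U \<longleftrightarrow> a \<in> U \<or> b \<in> U"
proof -
  have "sup a b \<in> U \<longleftrightarrow> \<not> (- sup a b \<in> U)" using uf_neg[OF assms] by blast
  also have "\<dots> \<longleftrightarrow> \<not> (inf (- a) (- b) \<in> U)" by simp
  also have "\<dots> \<longleftrightarrow> a \<in> U \<or> b \<in> U" using uf_inf[OF assms] uf_neg[OF assms] by blast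
  finally show ?thesis .
qed

lemma uf_bot: assumes "ufilter U" shows "bot \<notin> U"
  using uf_neg[OF assms, of bot] uf_top[OF assms] by simp

definition fU :: "'a::boolean_algebra set \<Rightarrow> 'a \<times> 'a set \<Rightarrow> wk" where
  "fU U x = (if fst x \<in> U then (if rep (snd x) \<in> U then W1 else W0) else Wh)"

lemma fU_f: assumes "ufilter U"
  shows "fU U (i, cls i a) = (if i \<in> U then if a \<in> U then W1 else W0 else Wh)"
proof (cases "i \<in> U")
  case True
  have "rep (cls i a) \<in> U \<longleftrightarrow> inf (rep (cls i a)) i \<in> U" using uf_inf[OF assms] True by blast
  also have "\<dots> \<longleftrightarrow> inf a i \<in> U" by (simp add: rep_cls)
  also have "\<dots> \<longleftrightarrow> a \<in> U" using uf_inf[OF assms] True by blast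
  finally show ?thesis unfolding fU_def using True by simp
qed (simp add: fU_def)

definition J0 :: "'a::boolean_algebra \<times> 'a set \<Rightarrow> 'a \<times> 'a set" where
  "J0 x = (top, cls top (inf (fst x) (rep (snd x))))"

lemma J0_f: "J0 (i, cls i a) = (top, cls top (inf i a))"
proof -
  have "inf i (rep (cls i a)) = inf i a" using rep_cls[of i a] by (metis inf_commute)
  thus ?thesis unfolding J0_def by (simp add: cls_eq)
qed

lemma fU_hom:
  assumes "ufilter U"
  shows "hom_wk (A_sys I J0) (fU U)"
  unfolding hom_wk_def A_sys_def
proof (simp only: balg.simps, intro conjI ballI)
  note uf = uf_inf[OF assms] uf_sup[OF assms] uf_neg[OF assms] uf_top[OF assms] uf_bot[OF assms]
    fU_f[OF assms]
  fix x y assume "x \<in> pl_carrier I" "y \<in> pl_carrier I"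
  then obtain i a j b where x: "x = (i, cls i a)" and y: "y = (j, cls j b)"
    by (metis carrE)
  show "fU U (pl_meet x y) = wmeet (fU U x) (fU U y)"
    unfolding x y pl_meet_f by (simp add: uf wmeet_def)
  show "fU U (pl_join x y) = wjoin (fU U x) (fU U y)"
    unfolding x y pl_join_f by (simp add: uf wjoin_def)
next
  note uf = uf_inf[OF assms] uf_sup[OF assms] uf_neg[OF assms] uf_top[OF assms] uf_bot[OF assms]
    fU_f[OF assms]
  fix x assume "x \<in> pl_carrier I"
  then obtain i a where x: "x = (i, cls i a)" by (metis carrE)
  show "fU U (pl_neg x) = wneg (fU U x)"
    unfolding x pl_neg_f by (simp add: uf)
  show "fU U (J0 x) = wJ2 (fU U x)"
    unfolding x J0_f by (simp add: uf wJ2_def)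
next
  note uf = uf_inf[OF assms] uf_sup[OF assms] uf_neg[OF assms] uf_top[OF assms] uf_bot[OF assms]
    fU_f[OF assms]
  show "fU U pl_zero = W0" unfolding pl_zero_def by (simp add: uf)
  show "fU U pl_one = W1" unfolding pl_one_def by (simp add: uf)
qed

lemma not_le_nonbot:
  fixes a :: "'a::boolean_algebra"
  shows "\<not> a \<le> b \<Longrightarrow> inf a (- b) \<noteq> bot"
  using compl_bot_le by blast

lemma sep_idx:
  fixes i :: "'a::boolean_algebra"
  assumes "\<forall>U. ufilter U \<longrightarrow> fU U (i, cls i a) = fU U (j, cls j b)"
  shows "i \<le> j"
proof (rule ccontr)
  assume "\<not> i \<le> j"
  then obtain U where U: "ufilter U" "inf i (- j) \<in> U"
    using ultrafilter_exists not_le_nonbot by blast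
  hence "i \<in> U" "- j \<in> U" using uf_inf[OF U(1)] by simp_all
  hence "i \<in> U" "j \<notin> U" using uf_neg[OF U(1)] by simp_all
  moreover have "fU U (i, cls i a) = fU U (j, cls j b)" using assms U(1) by blast
  ultimately show False unfolding fU_f[OF U(1)] by (simp split: if_splits)
qed

lemma sep_fib:
  fixes i :: "'a::boolean_algebra"
  assumes "\<forall>U. ufilter U \<longrightarrow> fU U (i, cls i a) = fU U (i, cls i b)"
  shows "inf a i \<le> inf b i"
proof (rule ccontr)
  assume "\<not> inf a i \<le> inf b i"
  then obtain U where U: "ufilter U" "inf (inf a i) (- inf b i) \<in> U"
    using ultrafilter_exists not_le_nonbot by blast
  have h1: "inf a i \<in> U" "- inf b i \<in> U" using U(2) uf_inf[OF U(1)] by simp_all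
  have "i \<in> U" "a \<in> U" using h1(1) uf_inf[OF U(1), of a i] by blast+
  have "inf b i \<notin> U" using h1(2) uf_neg[OF U(1), of "inf b i"] by blast
  hence "b \<notin> U" using \<open>i \<in> U\<close> uf_inf[OF U(1), of b i] by blast
  moreover have "fU U (i, cls i a) = fU U (i, cls i b)" using assms U(1) by blast
  ultimately show False unfolding fU_f[OF U(1)] using \<open>i \<in> U\<close> \<open>a \<in> U\<close> by simp
qed

lemma part1:
  fixes I :: "'a::boolean_algebra set"
  assumes sys: "bochvar_system I"
  shows "bochvar_alg (A_sys I J0)"
  unfolding bochvar_alg_def
proof (intro conjI)
  have tI: "top \<in> I" and iI: "\<And>i j. i \<in> I \<Longrightarrow> j \<in> I \<Longrightarrow> inf i j \<in> I"
    using sys bochvar_system_def by blast+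
  show "is_algebra (A_sys I J0)"
    unfolding is_algebra_def A_sys_def
  proof (simp only: balg.simps, intro conjI ballI)
    fix x y assume "x \<in> pl_carrier I" "y \<in> pl_carrier I"
    then obtain i a j b where x: "x = (i, cls i a)" "i \<in> I" and y: "y = (j, cls j b)" "j \<in> I"
      by (metis carrE)
    show "pl_meet x y \<in> pl_carrier I" "pl_join x y \<in> pl_carrier I"
      unfolding x y pl_meet_f pl_join_f mem_carr using iI x y by auto
  next
    fix x assume "x \<in> pl_carrier I"
    then obtain i a where x: "x = (i, cls i a)" "i \<in> I" by (metis carrE)
    show "pl_neg x \<in> pl_carrier I" "J0 x \<in> pl_carrier I"
      unfolding x pl_neg_f J0_f mem_carr using x tI by auto
  next
    show "pl_zero \<in> pl_carrier I" "pl_one \<in> pl_carrier I"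
      unfolding pl_zero_def pl_one_def mem_carr using tI by auto
  qed
  show "\<exists>F. (\<forall>f\<in>F. hom_wk (A_sys I J0) f) \<and>
        (\<forall>a\<in>carr (A_sys I J0). \<forall>b\<in>carr (A_sys I J0). (\<forall>f\<in>F. f a = f b) \<longrightarrow> a = b)"
  proof (rule exI[where x="{fU (U::'a set) | U. ufilter U}"], intro conjI ballI impI)
    fix f assume "f \<in> {fU (U::'a set) | U. ufilter U}"
    thus "hom_wk (A_sys I J0) f" using fU_hom by blast
  next
    fix x y assume "x \<in> carr (A_sys I J0)" "y \<in> carr (A_sys I J0)"
      and eq: "\<forall>f\<in>{fU (U::'a set) | U. ufilter U}. f x = f y"
    hence "x \<in> pl_carrier I" "y \<in> pl_carrier I" unfolding A_sys_def by simp_all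
    then obtain i a j b where x: "x = (i, cls i a)" and y: "y = (j, cls j b)"
      by (metis carrE)
    have eq': "\<forall>U. ufilter U \<longrightarrow> fU U x = fU U y" using eq by blast
    have "i \<le> j" using eq' unfolding x y by (rule sep_idx)
    moreover have "j \<le> i"
    proof (rule sep_idx)
      show "\<forall>U. ufilter U \<longrightarrow> fU U (j, cls j b) = fU U (i, cls i a)" using eq' unfolding x y by simp
    qed
    ultimately have ij: "i = j" by (rule antisym)
    have "inf a i \<le> inf b i" using eq' unfolding x y ij by (rule sep_fib)
    moreover have "inf b i \<le> inf a i"
    proof (rule sep_fib)
      show "\<forall>U. ufilter U \<longrightarrow> fU U (i, cls i b) = fU U (i, cls i a)" using eq' unfolding x y ij by simp
    qed
    ultimately have "inf a i = inf b i" by (rule antisym)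
    thus "x = y" unfolding x y ij by (simp add: cls_eq)
  qed
qed

theorem theorem3p6:
  fixes I :: "'a::boolean_algebra set"
  assumes "bochvar_system I"
  shows "(\<exists>J. bochvar_alg (A_sys I J)) \<and>
         (\<forall>J. bochvar_alg (A_sys I J) \<longrightarrow> iso_to_BA I (A_sys I J))"
proof (intro conjI allI impI)
  show "\<exists>J. bochvar_alg (A_sys I J)" using part1[OF assms] by blast
next
  fix J assume ba: "bochvar_alg (A_sys I J)"
  have tI: "top \<in> I" using assms bochvar_system_def by blast
  define g where "g = (\<lambda>x::'a. (top::'a, cls top x))"
  have fib: "fibre (A_sys I J) top = {x \<in> pl_carrier I. fst x = top}"
    unfolding fibre_def A_sys_def by simp
  have bij: "bij_betw g UNIV (fibre (A_sys I J) top)"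
    unfolding bij_betw_def
  proof
    show "inj g" unfolding inj_def g_def by (simp add: cls_eq)
    show "range g = fibre (A_sys I J) top"
    proof
      show "range g \<subseteq> fibre (A_sys I J) top" unfolding fib g_def using tI mem_carr by auto
      show "fibre (A_sys I J) top \<subseteq> range g"
      proof
        fix x assume "x \<in> fibre (A_sys I J) top"
        hence "x \<in> pl_carrier I" "fst x = top" using fib by auto
        then obtain k a where "x = (k, cls k a)" "fst x = top" by (metis carrE)
        hence "x = g a" unfolding g_def by simp
        thus "x \<in> range g" by simp
      qed
    qed
  qed
  show "iso_to_BA I (A_sys I J)"
    unfolding iso_to_BA_def sys_iso_def
  proof (intro exI conjI allI ballI)
    show "bij_betw g UNIV (fibre (A_sys I J) top)" by (rule bij)
    fix x y :: 'a
    show "g (inf x y) = bmeet (A_sys I J) (g x) (g y)"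
      unfolding g_def A_sys_def by (simp add: pl_meet_f)
    show "g (sup x y) = bjoin (A_sys I J) (g x) (g y)"
      unfolding g_def A_sys_def by (simp add: pl_join_f)
  next
    fix x :: 'a
    show "g (- x) = bneg (A_sys I J) (g x)"
      unfolding g_def A_sys_def by (simp add: pl_neg_f)
  next
    show "g bot = bzero (A_sys I J)" unfolding g_def A_sys_def pl_zero_def by simp
    show "g top = bone (A_sys I J)" unfolding g_def A_sys_def pl_one_def by simp
  next
    fix i assume iI: "i \<in> I"
    have "J (fibre_top i) = g i"
      unfolding fibre_top_def g_def using part2[OF assms ba iI] .
    moreover have "bJ2 (A_sys I J) = J" unfolding A_sys_def by simp
    ultimately have "g i = bJ2 (A_sys I J) (fibre_top i)" by simp
    thus "g i \<in> K_set I (A_sys I J)"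
      unfolding K_set_def using iI by blast
  qed
qed

end
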